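(* Let $n,a,h,t$ be positive integers with $h\le n$ and $a\le t\le ah$. Let $\mathcal C\subseteq\mathbb Z^n$ be an $(a,h,t)$-AED code in $\mathbb Z^n$. Then its upper density satisfies $\overline{\mu}(\mathcal C)\le \frac{1}{t+1}$.
   Context: Channel over the alphabet $\mathbb Z$: an input $\mathbf x=(x_1,\dots,x_n)\in\mathbb Z^n$ can produce any output $\mathbf y\in\mathbb Z^n$ satisfying (1) $0\le y_i-x_i\le a$ for all $i$; (2) $\sum_{i=1}^n \mathbb 1_{\{y_i\ne x_i\}}\le h$; (3) $\sum_{i=1}^n (y_i-x_i)\le t$. Such error vectors $\mathbf y-\mathbf x$ are called $(a,h,t)$-asymmetric errors, and $\mathrm{Out}(\mathbf x)$ denotes the set of all such outputs $\mathbf y$. A code $\mathcal C\subseteq\mathbb Z^n$ is an $(a,h,t)$-AED (asymmetric-error-detecting) code if for all $\mathbf x\in\mathcal C$ and all $\mathbf y\in\mathrm{Out}(\mathbf x)$ with $\mathbf y\neq\mathbf x$, we have $\mathbf y\notin\mathcal C$. The upper density of $\mathcal C\subseteq\mathbb Z^n$ is $\overline{\mu}(\mathcal C)=\limsup_{k\to\infty}\frac{|\mathcal C\cap\{-k,\dots,k\}^n|}{(2k+1)^n}$. *)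

theory Defs
  imports "HOL-Analysis.Analysis"
begin

definition zvecs :: "nat \<Rightarrow> int list set" where
  "zvecs n = {x. length x = n}"

definition asym_error :: "int \<Rightarrow> nat \<Rightarrow> int \<Rightarrow> int list \<Rightarrow> bool" where
  "asym_error a h t e \<longleftrightarrow>
     (\<forall>i<length e. 0 \<le> e ! i \<and> e ! i \<le> a) \<and>
     card {i. i < length e \<and> e ! i \<noteq> 0} \<le> h \<and>
     sum_list e \<le> t"

definition Out :: "int \<Rightarrow> nat \<Rightarrow> int \<Rightarrow> int list \<Rightarrow> int list set" where
  "Out a h t x = {y. length y = length x \<and> asym_error a h t (map2 (-) y x)}"

definition AED_code :: "nat \<Rightarrow> int \<Rightarrow> nat \<Rightarrow> int \<Rightarrow> int list set \<Rightarrow> bool" where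
  "AED_code n a h t C \<longleftrightarrow> C \<subseteq> zvecs n \<and>
     (\<forall>x\<in>C. \<forall>y\<in>Out a h t x. y \<noteq> x \<longrightarrow> y \<notin> C)"

definition box :: "nat \<Rightarrow> nat \<Rightarrow> int list set" where
  "box n k = {x. length x = n \<and> set x \<subseteq> {- int k..int k}}"

definition upper_density :: "nat \<Rightarrow> int list set \<Rightarrow> ereal" where
  "upper_density n C =
     limsup (\<lambda>k. ereal (real (card (C \<inter> box n k)) / (2 * real k + 1) ^ n))"

end

theory Submission imports Defs "HOL-Real_Asymp.Real_Asymp" begin

definition gg :: "int \<Rightarrow> int \<Rightarrow> nat \<Rightarrow> int" where
  "gg a j p = max 0 (min a (j - a * int p))"

lemma gg_sum: "a \<ge> 0 \<Longrightarrow> (\<Sum>p<n. gg a j p) = max 0 (min (a * int n) j)"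
proof (induction n arbitrary: j)
  case 0 then show ?case by (simp add: gg_def)
next
  case (Suc n)
  have "(\<Sum>p<Suc n. gg a j p) = gg a j 0 + (\<Sum>p<n. gg a j (Suc p))" by (rule sum.lessThan_Suc_shift)
  also have "(\<Sum>p<n. gg a j (Suc p)) = (\<Sum>p<n. gg a (j-a) p)" by (simp add: gg_def algebra_simps)
  also have "\<dots> = max 0 (min (a*int n) (j-a))" using Suc by simp
  finally have e: "(\<Sum>p<Suc n. gg a j p) = max 0 (min a j) + max 0 (min (a*int n) (j-a))" by (simp add: gg_def)
  have "0 \<le> a * int n" using Suc.prems by simp
  moreover have "a * int (Suc n) = a + a * int n" by (simp add: algebra_simps)
  ultimately show ?case unfolding e using Suc.prems by linarith
qed

lemma diff_err:
  assumes "a > 0" "0 \<le> i" "i < j" "j \<le> t" "t \<le> a * int h" "h \<le> n"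
  shows "asym_error a h t (map (\<lambda>p. gg a j p - gg a i p) [0..<n])"
    and "sum_list (map (\<lambda>p. gg a j p - gg a i p) [0..<n]) = j - i"
proof -
  have s: "sum_list (map (\<lambda>p. gg a j p - gg a i p) [0..<n]) = (\<Sum>p<n. gg a j p - gg a i p)"
    by (simp add: sum_set_upt_conv_sum_list_nat[symmetric] atLeast0LessThan)
  have hn: "a * int h \<le> a * int n" using assms by simp
  show ss: "sum_list (map (\<lambda>p. gg a j p - gg a i p) [0..<n]) = j - i"
  proof -
    have tn: "t \<le> a * int n" using assms hn by linarith
    have "max 0 (min (a*int n) j) = j" "max 0 (min (a*int n) i) = i" using tn assms by auto
    moreover have "a \<ge> 0" using assms by simp
    ultimately show ?thesis unfolding s sum_subtractf by (simp add: gg_sum)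
  qed
  have sub: "{p. p < length (map (\<lambda>p. gg a j p - gg a i p) [0..<n]) \<and>
      map (\<lambda>p. gg a j p - gg a i p) [0..<n] ! p \<noteq> 0} \<subseteq> {..<h}"
  proof
    fix p assume p: "p \<in> {p. p < length (map (\<lambda>p. gg a j p - gg a i p) [0..<n]) \<and>
      map (\<lambda>p. gg a j p - gg a i p) [0..<n] ! p \<noteq> 0}"
    show "p \<in> {..<h}"
    proof (rule ccontr)
      assume "p \<notin> {..<h}"
      then have hp: "a * int h \<le> a * int p" using assms by simp
      have "gg a j p = 0" "gg a i p = 0" unfolding gg_def using assms hp by linarith+
      then show False using p by auto
    qed
  qed
  have "card {p. p < length (map (\<lambda>p. gg a j p - gg a i p) [0..<n]) \<and>
      map (\<lambda>p. gg a j p - gg a i p) [0..<n] ! p \<noteq> 0} \<le> h"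
    using card_mono[OF _ sub] by simp
  moreover have "\<forall>p<length (map (\<lambda>p. gg a j p - gg a i p) [0..<n]).
      0 \<le> map (\<lambda>p. gg a j p - gg a i p) [0..<n] ! p \<and> map (\<lambda>p. gg a j p - gg a i p) [0..<n] ! p \<le> a"
    using assms by (auto simp: gg_def)
  ultimately show "asym_error a h t (map (\<lambda>p. gg a j p - gg a i p) [0..<n])"
    unfolding asym_error_def using ss assms by simp
qed

lemma card_box: "card (box n k) = (2*k+1)^n"
proof -
  have "box n k = {xs. set xs \<subseteq> {- int k..int k} \<and> length xs = n}" by (auto simp: box_def)
  then show ?thesis by (simp add: card_lists_length_eq nat_add_distrib nat_mult_distrib)
qed

lemma finite_box: "finite (box n k)"
proof -
  have "box n k = {xs. set xs \<subseteq> {- int k..int k} \<and> length xs = n}" by (auto simp: box_def)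
  then show ?thesis by (simp add: finite_lists_length_eq)
qed

lemma no_two:
  assumes "a > 0" "j < j'" "int j' \<le> t" "t \<le> a * int h" "h \<le> n"
    and C: "AED_code n a h t C" and cC: "c \<in> C" "c' \<in> C"
    and eq: "map2 (-) c (map (gg a (int j)) [0..<n]) = map2 (-) c' (map (gg a (int j')) [0..<n])"
  shows False
proof -
  have lc: "length c = n" "length c' = n" using C cC by (auto simp: AED_code_def zvecs_def)
  have D: "map2 (-) c' c = map (\<lambda>p. gg a (int j') p - gg a (int j) p) [0..<n]"
  proof (rule nth_equalityI)
    show "length (map2 (-) c' c) = length (map (\<lambda>p. gg a (int j') p - gg a (int j) p) [0..<n])"
      using lc by simp
    fix p assume "p < length (map2 (-) c' c)"
    then have p: "p < n" using lc by simp
    have "map2 (-) c (map (gg a (int j)) [0..<n]) ! p = map2 (-) c' (map (gg a (int j')) [0..<n]) ! p"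
      using eq by simp
    then have "c ! p - gg a (int j) p = c' ! p - gg a (int j') p" using p lc by simp
    then show "map2 (-) c' c ! p = map (\<lambda>p. gg a (int j') p - gg a (int j) p) [0..<n] ! p"
      using p lc by simp
  qed
  have ae: "asym_error a h t (map2 (-) c' c)" unfolding D
    by (rule diff_err(1)) (use assms in auto)
  have sm: "sum_list (map2 (-) c' c) = int j' - int j" unfolding D
    by (rule diff_err(2)) (use assms in auto)
  have "c' \<in> Out a h t c" unfolding Out_def using ae lc by simp
  moreover have "c' \<noteq> c"
  proof
    assume "c' = c"
    have "map2 (-) c c = map (\<lambda>_. 0) c" for c :: "int list" by (induction c) auto
    then have "map2 (-) c' c = map (\<lambda>_. 0) c" using \<open>c' = c\<close> by simp
    then have "sum_list (map2 (-) c' c) = 0" by simp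
    then show False using sm assms by simp
  qed
  ultimately show False using C cC unfolding AED_code_def by blast
qed

lemma count:
  assumes "a > 0" "t \<le> a * int h" "h \<le> n" "t > 0"
    and C: "AED_code n a h t C"
  shows "(nat t + 1) * card (C \<inter> box n k) \<le> (2*(k + nat a)+1)^n"
proof -
  define F where "F = (\<lambda>(c::int list,j::nat). map2 (-) c (map (gg a (int j)) [0..<n]))"
  define S where "S = (C \<inter> box n k) \<times> {0..nat t}"
  have inj: "inj_on F S"
  proof (rule inj_onI)
    fix x y assume x: "x \<in> S" and y: "y \<in> S" and Fe: "F x = F y"
    obtain c j where cj: "x = (c,j)" by (cases x)
    obtain c' j' where cj': "y = (c',j')" by (cases y)
    have cC: "c \<in> C" "c' \<in> C" "j \<le> nat t" "j' \<le> nat t" using x y cj cj' S_def by auto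
    have e: "map2 (-) c (map (gg a (int j)) [0..<n]) = map2 (-) c' (map (gg a (int j')) [0..<n])"
      using Fe cj cj' F_def by simp
    have jj: "j = j'"
    proof (rule ccontr)
      assume "j \<noteq> j'"
      then consider "j < j'" | "j' < j" by linarith
      then show False
      proof cases
        case 1 then show ?thesis using no_two[OF assms(1) 1 _ assms(2,3) C cC(1,2) e] cC assms by linarith
      next
        case 2 then show ?thesis using no_two[OF assms(1) 2 _ assms(2,3) C cC(2,1) e[symmetric]] cC assms by linarith
      qed
    qed
    have lc: "length c = n" "length c' = n" using C cC by (auto simp: AED_code_def zvecs_def)
    have "c = c'"
    proof (rule nth_equalityI)
      show "length c = length c'" using lc by simp
      fix p assume "p < length c"
      then have p: "p < n" using lc by simp
      have "map2 (-) c (map (gg a (int j)) [0..<n]) ! p = map2 (-) c' (map (gg a (int j')) [0..<n]) ! p"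
        using e by simp
      then show "c ! p = c' ! p" using p lc jj by simp
    qed
    then show "x = y" using cj cj' jj by simp
  qed
  have img: "F ` S \<subseteq> box n (k + nat a)"
  proof
    fix y assume "y \<in> F ` S"
    then obtain c j where cS: "c \<in> C \<inter> box n k" "j \<le> nat t" and y: "y = F (c,j)" unfolding S_def by auto
    have lc: "length c = n" and sc: "set c \<subseteq> {- int k..int k}" using cS by (auto simp: box_def)
    have "set y \<subseteq> {- int (k + nat a)..int (k + nat a)}"
    proof
      fix z assume "z \<in> set y"
      then obtain p where p: "p < n" and z: "z = c ! p - gg a (int j) p"
        using y lc unfolding F_def by (auto simp: in_set_conv_nth)
      have "c ! p \<in> set c" using p lc by simp
      then have "c ! p \<in> {- int k..int k}" using sc by blast
      moreover have "0 \<le> gg a (int j) p" "gg a (int j) p \<le> a" using assms unfolding gg_def by auto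
      ultimately show "z \<in> {- int (k + nat a)..int (k + nat a)}" using z assms by auto
    qed
    moreover have "length y = n" using y lc unfolding F_def by simp
    ultimately show "y \<in> box n (k + nat a)" by (simp add: box_def)
  qed
  have fS: "finite S" unfolding S_def using finite_box by simp
  have "card S \<le> card (box n (k + nat a))"
    using card_inj_on_le[OF inj img finite_box] .
  moreover have "card S = card (C \<inter> box n k) * (nat t + 1)" unfolding S_def
    by (simp add: card_cartesian_product)
  ultimately show ?thesis by (simp add: card_box mult.commute)
qed

theorem theorem1:
  fixes n h :: nat and a t :: int and C :: "int list set"
  assumes "n > 0" "a > 0" "h > 0" "t > 0"
    and "h \<le> n" "a \<le> t" "t \<le> a * int h"
    and "AED_code n a h t C"
  shows "upper_density n C \<le> ereal (1 / (real_of_int t + 1))"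
proof -
  define A where "A = nat a"
  define u where "u = (\<lambda>k::nat. (1 / (real_of_int t + 1)) * ((2 * real k + 2 * real A + 1) / (2 * real k + 1)) ^ n)"
  have le: "real (card (C \<inter> box n k)) / (2 * real k + 1) ^ n \<le> u k" for k
  proof -
    have "(nat t + 1) * card (C \<inter> box n k) \<le> (2*(k + A)+1)^n"
      using count[OF assms(2) assms(7) assms(5) assms(4) assms(8)] A_def by simp
    then have "real (nat t + 1) * real (card (C \<inter> box n k)) \<le> real ((2*(k + A)+1)^n)"
      by (metis of_nat_le_iff of_nat_mult)
    moreover have "real (nat t + 1) = real_of_int t + 1" using assms by simp
    ultimately have "(real_of_int t + 1) * real (card (C \<inter> box n k)) \<le> (2 * real k + 2 * real A + 1) ^ n"
      by (simp add: algebra_simps)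
    then have "real (card (C \<inter> box n k)) \<le> (2 * real k + 2 * real A + 1) ^ n / (real_of_int t + 1)"
      using assms by (simp add: field_simps)
    then have "real (card (C \<inter> box n k)) / (2 * real k + 1) ^ n \<le>
        (2 * real k + 2 * real A + 1) ^ n / (real_of_int t + 1) / (2 * real k + 1) ^ n"
      by (rule divide_right_mono) simp
    also have "\<dots> = u k" unfolding u_def by (simp add: power_divide)
    finally show ?thesis .
  qed
  have base: "(\<lambda>k::nat. (2 * real k + 2 * real A + 1) / (2 * real k + 1)) \<longlonglongrightarrow> 1"
    by real_asymp
  have "u \<longlonglongrightarrow> (1 / (real_of_int t + 1)) * 1 ^ n"
    unfolding u_def by (intro tendsto_intros base)
  then have "(\<lambda>k. ereal (u k)) \<longlonglongrightarrow> ereal (1 / (real_of_int t + 1))"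
    by simp
  then have lu: "limsup (\<lambda>k. ereal (u k)) = ereal (1 / (real_of_int t + 1))"
    by (intro lim_imp_Limsup) simp_all
  have "upper_density n C \<le> limsup (\<lambda>k. ereal (u k))"
    unfolding upper_density_def
    by (rule Limsup_mono) (use le in auto)
  then show ?thesis using lu by simp
qed

end
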